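(* With notation as in the context, if $s\in\mathbb{S}_{p^n}$, $t\in\mathbb{S}_{p^n}(h)$ and $s\preceq\mathfrak{a}(t)$, then $\mathfrak{a}(H(s,t))=\mathfrak{a}(t)-s$.
   Context: Let $p$ be a prime, $n\ge1$, $\mathbb{S}_{p^n}=\{0,\dots,p^n-1\}$; write $s\in\mathbb{S}_{p^n}$ as $s=\sum_{i=1}^n s_{(n-i)}p^{n-i}$ with digits in $\{0,\dots,p-1\}$, and $s\preceq t$ means $s_{(n-i)}\le t_{(n-i)}$ for all $i$. Let $b_1,\dots,b_n$ be integers prime to $p$, $\mathfrak{b}(s)=\sum_i s_{(n-i)}p^{n-i}b_i$, and for $t\in\mathbb{Z}$ let $\mathfrak{a}(t)\in\mathbb{S}_{p^n}$ be the unique element with $\mathfrak{b}(\mathfrak{a}(t))\equiv-t\pmod{p^n}$. Let $r:\mathbb{Z}\to\mathbb{S}_{p^n}$ be reduction mod $p^n$. Fix $h\in\mathbb{Z}$, let $\mathbb{S}_{p^n}(h)=\{t\in\mathbb{Z}:h\le t<h+p^n\}$, and for $s\in\mathbb{S}_{p^n}$, $t\in\mathbb{S}_{p^n}(h)$ set $H(s,t)=h+r(\mathfrak{b}(s)+t-h)$. *)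

theory Defs
  imports "HOL-Number_Theory.Number_Theory"
begin

text \<open>Digits: for s in S_{p^n} = {0..<p^n}, s = sum_{i=1..n} digit p n s i * p^(n-i),
  i.e. digit p n s i is the coefficient s_{(n-i)} of p^(n-i).\<close>
definition digit :: "int \<Rightarrow> nat \<Rightarrow> int \<Rightarrow> nat \<Rightarrow> int" where
  "digit p n s i = (s div p ^ (n - i)) mod p"

definition Sp :: "int \<Rightarrow> nat \<Rightarrow> int set" where
  "Sp p n = {0..<p ^ n}"

definition Sph :: "int \<Rightarrow> nat \<Rightarrow> int \<Rightarrow> int set" where
  "Sph p n h = {t. h \<le> t \<and> t < h + p ^ n}"

definition digit_le :: "int \<Rightarrow> nat \<Rightarrow> int \<Rightarrow> int \<Rightarrow> bool" where
  "digit_le p n s t \<longleftrightarrow> (\<forall>i\<in>{1..n}. digit p n s i \<le> digit p n t i)"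

definition frak_b :: "int \<Rightarrow> nat \<Rightarrow> (nat \<Rightarrow> int) \<Rightarrow> int \<Rightarrow> int" where
  "frak_b p n b s = (\<Sum>i=1..n. digit p n s i * p ^ (n - i) * b i)"

definition frak_a :: "int \<Rightarrow> nat \<Rightarrow> (nat \<Rightarrow> int) \<Rightarrow> int \<Rightarrow> int" where
  "frak_a p n b t = (THE a. a \<in> Sp p n \<and> [frak_b p n b a = - t] (mod p ^ n))"

definition red :: "int \<Rightarrow> nat \<Rightarrow> int \<Rightarrow> int" where
  "red p n t = t mod p ^ n"

definition Hmap :: "int \<Rightarrow> nat \<Rightarrow> (nat \<Rightarrow> int) \<Rightarrow> int \<Rightarrow> int \<Rightarrow> int \<Rightarrow> int" where
  "Hmap p n b h s t = h + red p n (frak_b p n b s + t - h)"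

end

theory Submission
  imports Defs
begin

lemma cong_l1: "[x + p*y = x' + p*y'] (mod p) \<Longrightarrow> [x = x'] (mod (p::int))"
  by (simp add: cong_def)
lemma cong_l2: "[x + p*y = x + p*y'] (mod (p*m)) \<Longrightarrow> p > 0 \<Longrightarrow> [y = y'] (mod (m::int))"
  by (simp add: cong_iff_dvd_diff right_diff_distrib[symmetric])

definition G :: "int \<Rightarrow> nat \<Rightarrow> (nat \<Rightarrow> int) \<Rightarrow> int \<Rightarrow> int" where
  "G p n c a = (\<Sum>j<n. (a div p ^ j mod p) * p ^ j * c j)"

lemma G_0 [simp]: "G p 0 c a = 0" by (simp add: G_def)

lemma G_Suc:
  assumes "p > 0"
  shows "G p (Suc n) c a = (a mod p) * c 0 + p * G p n (\<lambda>j. c (Suc j)) (a div p)"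
proof -
  have "\<And>j. (a div p ^ Suc j mod p) * p ^ Suc j * c (Suc j)
          = p * ((a div p) div p ^ j mod p * p ^ j * c (Suc j))"
    using assms by (simp add: zdiv_zmult2_eq)
  hence h: "(\<Sum>j<n. (a div p ^ Suc j mod p) * p ^ Suc j * c (Suc j))
      = p * (\<Sum>j<n. (a div p) div p ^ j mod p * p ^ j * c (Suc j))"
    by (simp only: sum_distrib_left)
  show ?thesis
    unfolding G_def sum.lessThan_Suc_shift h by simp
qed

lemma G_inj:
  assumes "prime p"
  shows "(\<forall>j<n. coprime (c j) p) \<Longrightarrow> [G p n c a = G p n c a'] (mod p ^ n) \<Longrightarrow> [a = a'] (mod p ^ n)"
proof (induction n arbitrary: c a a')
  case 0
  then show ?case by simp
next
  case (Suc n)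
  have p0: "p > 0" using assms prime_gt_0_int by blast
  have c0: "coprime (c 0) p" using Suc.prems by auto
  have cg: "[(a mod p) * c 0 + p * G p n (\<lambda>j. c (Suc j)) (a div p)
           = (a' mod p) * c 0 + p * G p n (\<lambda>j. c (Suc j)) (a' div p)] (mod p * p ^ n)"
    using Suc.prems(2) by (simp add: G_Suc[OF p0])
  hence "[(a mod p) * c 0 = (a' mod p) * c 0] (mod p)"
    using cong_l1[OF cong_dvd_modulus[OF cg, of p]] by simp
  hence "[a mod p = a' mod p] (mod p)" using cong_mult_rcancel[OF c0] by blast
  hence am: "a mod p = a' mod p" by (simp add: cong_def)
  hence "[G p n (\<lambda>j. c (Suc j)) (a div p) = G p n (\<lambda>j. c (Suc j)) (a' div p)] (mod p ^ n)"
    using cong_l2[OF cg[unfolded am]] p0 by simp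
  moreover have "\<forall>j<n. coprime (c (Suc j)) p" using Suc.prems(1) by auto
  ultimately have "[a div p = a' div p] (mod p ^ n)" using Suc.IH[of "\<lambda>j. c (Suc j)"] by blast
  then obtain k where k: "a div p - a' div p = p ^ n * k" by (auto simp: cong_iff_dvd_diff)
  have "a - a' = p * (a div p - a' div p) + (a mod p - a' mod p)"
    using div_mult_mod_eq[of a p] div_mult_mod_eq[of a' p] by (simp add: algebra_simps)
  hence "a - a' = p ^ Suc n * k" using k am by simp
  thus ?case by (simp add: cong_iff_dvd_diff)
qed

lemma G_sub:
  assumes "p > 0"
  shows "(\<forall>j<n. s div p ^ j mod p \<le> a div p ^ j mod p) \<Longrightarrow> G p n c (a - s) = G p n c a - G p n c s"
proof (induction n arbitrary: c a s)
  case 0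
  then show ?case by simp
next
  case (Suc n)
  have le0: "s mod p \<le> a mod p" using Suc.prems[rule_format, of 0] by simp
  have dec: "a - s = p * (a div p - s div p) + (a mod p - s mod p)"
    using div_mult_mod_eq[of a p] div_mult_mod_eq[of s p] by (simp add: algebra_simps)
  have r: "0 \<le> a mod p - s mod p" "a mod p - s mod p < p"
    using le0 assms pos_mod_bound[of p s] pos_mod_sign[of p a] pos_mod_bound[of p a] pos_mod_sign[of p s] by linarith+
  have dec': "a - s = (a mod p - s mod p) + (a div p - s div p) * p"
    using dec by (simp add: mult.commute)
  have m: "(a - s) mod p = a mod p - s mod p"
    unfolding dec' using r assms by simp
  have d: "(a - s) div p = a div p - s div p"
    unfolding dec' using r assms by simp
  have sh: "\<forall>j<n. (s div p) div p ^ j mod p \<le> (a div p) div p ^ j mod p"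
  proof (intro allI impI)
    fix j assume "j < n"
    then have "Suc j < Suc n" by simp
    then have "s div p ^ Suc j mod p \<le> a div p ^ Suc j mod p" using Suc.prems by blast
    then show "(s div p) div p ^ j mod p \<le> (a div p) div p ^ j mod p"
      using assms by (simp add: zdiv_zmult2_eq)
  qed
  have IH: "G p n (\<lambda>j. c (Suc j)) (a div p - s div p) = G p n (\<lambda>j. c (Suc j)) (a div p) - G p n (\<lambda>j. c (Suc j)) (s div p)"
    using Suc.IH[where c="\<lambda>j. c (Suc j)" and a="a div p" and s="s div p"] sh by simp
  show ?case
    unfolding G_Suc[OF assms] m d IH by (simp add: algebra_simps)
qed

lemma digit_le_imp_le:
  assumes "p > 0"
  shows "0 \<le> s \<Longrightarrow> s < p ^ n \<Longrightarrow> 0 \<le> a \<Longrightarrow> (\<forall>j<n. s div p ^ j mod p \<le> a div p ^ j mod p) \<Longrightarrow> s \<le> (a::int)"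
proof (induction n arbitrary: a s)
  case 0
  then show ?case by simp
next
  case (Suc n)
  have le0: "s mod p \<le> a mod p" using Suc.prems(4)[rule_format, of 0] by simp
  have sh: "\<forall>j<n. (s div p) div p ^ j mod p \<le> (a div p) div p ^ j mod p"
  proof (intro allI impI)
    fix j assume "j < n"
    then have "Suc j < Suc n" by simp
    then have "s div p ^ Suc j mod p \<le> a div p ^ Suc j mod p" using Suc.prems by blast
    then show "(s div p) div p ^ j mod p \<le> (a div p) div p ^ j mod p"
      using assms by (simp add: zdiv_zmult2_eq)
  qed
  have "s div p * p \<le> s" using div_mult_mod_eq[of s p] pos_mod_sign[of p s] assms by linarith
  hence "s div p * p < p ^ n * p" using Suc.prems(2) by (simp add: mult.commute)
  hence lt: "s div p < p ^ n" using assms by simp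
  have "s div p \<le> a div p"
    using Suc.IH[where a="a div p" and s="s div p"] sh lt Suc.prems(1,3) assms by (simp add: pos_imp_zdiv_nonneg_iff)
  hence "s div p * p \<le> a div p * p" using assms by (simp add: mult_right_mono)
  thus ?case
    using le0 div_mult_mod_eq[of a p] div_mult_mod_eq[of s p] by linarith
qed

lemma frak_b_G: "frak_b p n b x = G p n (\<lambda>j. b (n - j)) x"
  unfolding frak_b_def G_def digit_def
  by (rule sum.reindex_bij_witness[of _ "\<lambda>j. n - j" "\<lambda>i. n - i"]) auto

lemma digit_le_G:
  assumes "digit_le p n s a"
  shows "\<forall>j<n. s div p ^ j mod p \<le> a div p ^ j mod p"
proof (intro allI impI)
  fix j assume j: "j < n"
  then have "n - j \<in> {1..n}" by auto
  then have "digit p n s (n - j) \<le> digit p n a (n - j)" using assms unfolding digit_le_def by blast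
  moreover have "n - (n - j) = j" using j by simp
  ultimately show "s div p ^ j mod p \<le> a div p ^ j mod p" unfolding digit_def by simp
qed

lemma frak_ex:
  assumes "prime p" and cop: "\<forall>i\<in>{1..n}. coprime (b i) p"
  shows "\<exists>!x. x \<in> Sp p n \<and> [frak_b p n b x = u] (mod p ^ n)"
proof -
  have p0: "p > 0" using assms prime_gt_0_int by blast
  hence pn: "p ^ n > 0" by simp
  have copc: "\<forall>j<n. coprime (b (n - j)) p" using cop by auto
  have inj: "x = y" if "x \<in> Sp p n" "y \<in> Sp p n" "[frak_b p n b x = frak_b p n b y] (mod p ^ n)" for x y
  proof -
    have "[x = y] (mod p ^ n)"
      using G_inj[OF assms(1) copc] that(3) unfolding frak_b_G by blast
    thus ?thesis using that(1,2) cong_less_imp_eq_int unfolding Sp_def by auto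
  qed
  define f where "f x = frak_b p n b x mod p ^ n" for x
  have "inj_on f (Sp p n)"
    by (rule inj_onI) (use inj in \<open>auto simp: f_def cong_def\<close>)
  moreover have "f ` Sp p n \<subseteq> Sp p n" using pn unfolding f_def Sp_def by auto
  moreover have "finite (Sp p n)" unfolding Sp_def by simp
  ultimately have "f ` Sp p n = Sp p n" using endo_inj_surj by blast
  moreover have "u mod p ^ n \<in> Sp p n" using pn unfolding Sp_def by simp
  ultimately obtain x where x: "x \<in> Sp p n" "f x = u mod p ^ n" by (metis imageE)
  hence "[frak_b p n b x = u] (mod p ^ n)" unfolding f_def cong_def by simp
  then show ?thesis using x(1) inj by (metis cong_sym cong_trans)
qed

theorem proposition3p11:
  fixes p :: int and n :: nat and b :: "nat \<Rightarrow> int" and h s t :: int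
  assumes "prime p" and "n \<ge> 1"
    and "\<forall>i\<in>{1..n}. coprime (b i) p"
    and "s \<in> Sp p n" and "t \<in> Sph p n h"
    and "digit_le p n s (frak_a p n b t)"
  shows "frak_a p n b (Hmap p n b h s t) = frak_a p n b t - s"
proof -
  have p0: "p > 0" using assms prime_gt_0_int by blast
  define A where "A = frak_a p n b t"
  have A: "A \<in> Sp p n \<and> [frak_b p n b A = - t] (mod p ^ n)"
    unfolding A_def frak_a_def by (rule theI'[OF frak_ex[OF assms(1,3)]])
  have dl: "\<forall>j<n. s div p ^ j mod p \<le> A div p ^ j mod p"
    using digit_le_G assms(6) unfolding A_def by blast
  have "s \<le> A" using digit_le_imp_le[OF p0 _ _ _ dl] assms(4) A unfolding Sp_def by auto
  hence AS: "A - s \<in> Sp p n" using A assms(4) unfolding Sp_def by auto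
  have fsub: "frak_b p n b (A - s) = frak_b p n b A - frak_b p n b s"
    unfolding frak_b_G using G_sub[OF p0 dl] by blast
  define H where "H = Hmap p n b h s t"
  have "[H = frak_b p n b s + t] (mod p ^ n)"
    unfolding H_def Hmap_def red_def cong_def by (simp add: mod_add_right_eq)
  hence c1: "[- H = - (frak_b p n b s + t)] (mod p ^ n)" using cong_minus_minus_iff[of H "frak_b p n b s + t" "p ^ n"] by blast
  have "[frak_b p n b A - frak_b p n b s = - t - frak_b p n b s] (mod p ^ n)"
    using A cong_diff cong_refl by blast
  hence "[frak_b p n b (A - s) = - H] (mod p ^ n)"
    using c1 fsub by (metis cong_sym cong_trans minus_add_distrib diff_conv_add_uminus add.commute)
  hence "frak_a p n b H = A - s"
    unfolding frak_a_def using AS by (intro the1_equality[OF frak_ex[OF assms(1,3)]]) auto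
  thus ?thesis unfolding H_def A_def .
qed

end
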